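(* Let $T$ be a tree. Then (1) $\chi_{ei}(T)=1$ if and only if $\operatorname{diam}(T)\le 2$; and (2) $\chi_{ei}(T)=2$ if and only if $\operatorname{diam}(T)\ge 3$.
   Context: All graphs are finite and simple. A path $P_4$ in $G$ is a sequence $uxyv$ of four distinct vertices with $ux,xy,yv\in E(G)$; $u$ and $v$ are its end vertices. An $e$-injective $k$-coloring of a graph $G$ is a function $f:V(G)\to\{1,\dots,k\}$ such that $f(u)\ne f(v)$ whenever $u$ and $v$ are the end vertices of some path $P_4=uxyv$ in $G$ (the coloring need not be proper). The $e$-injective chromatic number $\chi_{ei}(G)$ is the minimum positive integer $k$ such that $G$ has an $e$-injective $k$-coloring. $\operatorname{diam}(T)$ denotes the diameter of $T$. *)

theory Defs
  imports Main
begin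

definition simple_graph :: "'a set \<Rightarrow> ('a \<Rightarrow> 'a \<Rightarrow> bool) \<Rightarrow> bool" where
  "simple_graph V E \<longleftrightarrow> finite V \<and> (\<forall>u v. E u v \<longrightarrow> u \<in> V \<and> v \<in> V)
     \<and> (\<forall>u v. E u v \<longrightarrow> E v u) \<and> (\<forall>u. \<not> E u u)"

definition walk :: "'a set \<Rightarrow> ('a \<Rightarrow> 'a \<Rightarrow> bool) \<Rightarrow> 'a list \<Rightarrow> bool" where
  "walk V E xs \<longleftrightarrow> xs \<noteq> [] \<and> set xs \<subseteq> V \<and> (\<forall>i. Suc i < length xs \<longrightarrow> E (xs ! i) (xs ! Suc i))"

definition connected_graph :: "'a set \<Rightarrow> ('a \<Rightarrow> 'a \<Rightarrow> bool) \<Rightarrow> bool" where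
  "connected_graph V E \<longleftrightarrow> (\<forall>u\<in>V. \<forall>v\<in>V. \<exists>xs. walk V E xs \<and> hd xs = u \<and> last xs = v)"

definition has_cycle :: "'a set \<Rightarrow> ('a \<Rightarrow> 'a \<Rightarrow> bool) \<Rightarrow> bool" where
  "has_cycle V E \<longleftrightarrow> (\<exists>xs. walk V E xs \<and> distinct xs \<and> length xs \<ge> 3 \<and> E (last xs) (hd xs))"

definition is_tree :: "'a set \<Rightarrow> ('a \<Rightarrow> 'a \<Rightarrow> bool) \<Rightarrow> bool" where
  "is_tree V E \<longleftrightarrow> simple_graph V E \<and> V \<noteq> {} \<and> connected_graph V E \<and> \<not> has_cycle V E"

definition gdist :: "'a set \<Rightarrow> ('a \<Rightarrow> 'a \<Rightarrow> bool) \<Rightarrow> 'a \<Rightarrow> 'a \<Rightarrow> nat" where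
  "gdist V E u v = (LEAST n. \<exists>xs. walk V E xs \<and> hd xs = u \<and> last xs = v \<and> length xs = Suc n)"

definition diam :: "'a set \<Rightarrow> ('a \<Rightarrow> 'a \<Rightarrow> bool) \<Rightarrow> nat" where
  "diam V E = Max {gdist V E u v | u v. u \<in> V \<and> v \<in> V}"

definition is_P4 :: "('a \<Rightarrow> 'a \<Rightarrow> bool) \<Rightarrow> 'a \<Rightarrow> 'a \<Rightarrow> 'a \<Rightarrow> 'a \<Rightarrow> bool" where
  "is_P4 E u x y v \<longleftrightarrow> distinct [u, x, y, v] \<and> E u x \<and> E x y \<and> E y v"

definition e_injective_coloring :: "'a set \<Rightarrow> ('a \<Rightarrow> 'a \<Rightarrow> bool) \<Rightarrow> nat \<Rightarrow> ('a \<Rightarrow> nat) \<Rightarrow> bool" where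
  "e_injective_coloring V E k f \<longleftrightarrow> f ` V \<subseteq> {1..k}
     \<and> (\<forall>u x y v. is_P4 E u x y v \<longrightarrow> f u \<noteq> f v)"

definition chi_ei :: "'a set \<Rightarrow> ('a \<Rightarrow> 'a \<Rightarrow> bool) \<Rightarrow> nat" where
  "chi_ei V E = (LEAST k. k > 0 \<and> (\<exists>f. e_injective_coloring V E k f))"

end

theory Submission
  imports Defs
begin

fun chain :: "('a \<Rightarrow> 'a \<Rightarrow> bool) \<Rightarrow> 'a list \<Rightarrow> bool" where
  "chain E (x # y # ys) = (E x y \<and> chain E (y # ys))"
| "chain E _ = True"

lemma chain_idx: "(\<forall>i. Suc i < length xs \<longrightarrow> E (xs ! i) (xs ! Suc i)) \<longleftrightarrow> chain E xs"
proof (induction E xs rule: chain.induct)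
  case (1 E x y ys)
  show ?case
  proof
    assume H: "\<forall>i. Suc i < length (x # y # ys) \<longrightarrow> E ((x # y # ys) ! i) ((x # y # ys) ! Suc i)"
    have "E x y" using H[rule_format, of 0] by simp
    moreover have "\<forall>i. Suc i < length (y # ys) \<longrightarrow> E ((y # ys) ! i) ((y # ys) ! Suc i)"
      using H by (metis Suc_less_eq length_Cons nth_Cons_Suc)
    ultimately show "chain E (x # y # ys)" using 1 by simp
  next
    assume H: "chain E (x # y # ys)"
    show "\<forall>i. Suc i < length (x # y # ys) \<longrightarrow> E ((x # y # ys) ! i) ((x # y # ys) ! Suc i)"
    proof (intro allI impI)
      fix i assume "Suc i < length (x # y # ys)"
      then show "E ((x # y # ys) ! i) ((x # y # ys) ! Suc i)"
        using H 1 by (cases i) auto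
    qed
  qed
qed auto

lemma walk_chain: "walk V E xs \<longleftrightarrow> xs \<noteq> [] \<and> set xs \<subseteq> V \<and> chain E xs"
  unfolding walk_def chain_idx by simp

lemma chain_append:
  "chain E (xs @ ys) \<longleftrightarrow> chain E xs \<and> chain E ys \<and> (xs \<noteq> [] \<and> ys \<noteq> [] \<longrightarrow> E (last xs) (hd ys))"
proof (induction xs)
  case Nil then show ?case by simp
next
  case (Cons a xs)
  then show ?case by (cases xs; cases ys) auto
qed

lemma chain_rev:
  assumes "\<And>u v. E u v \<Longrightarrow> E v u"
  shows "chain E (rev xs) \<longleftrightarrow> chain E xs"
proof (induction xs)
  case Nil then show ?case by simp
next
  case (Cons a xs)
  then show ?case using assms by (cases xs) (auto simp: chain_append last_rev)
qed

lemma odd_cycle: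
  assumes sg: "simple_graph V E"
  shows "xs \<noteq> [] \<Longrightarrow> set xs \<subseteq> V \<Longrightarrow> chain E xs \<Longrightarrow> odd (length xs) \<Longrightarrow> E (last xs) (hd xs)
    \<Longrightarrow> has_cycle V E"
proof (induction "length xs" arbitrary: xs rule: less_induct)
  case less
  have irr: "\<And>u. \<not> E u u" using sg unfolding simple_graph_def by blast
  show ?case
  proof (cases "distinct xs")
    case True
    have "length xs \<noteq> 1"
    proof
      assume "length xs = 1"
      then obtain z where "xs = [z]" by (cases xs) auto
      then show False using less irr by simp
    qed
    moreover have "length xs \<noteq> 0" using less(2) by simp
    ultimately have "length xs \<ge> 3" using less(5) by presburger
    then show ?thesis unfolding has_cycle_def using True less by (auto simp: walk_chain)
  next
    case False
    then obtain a y b c where xs: "xs = a @ [y] @ b @ [y] @ c"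
      using not_distinct_decomp by blast
    have ch: "chain E a" "chain E (y # b @ [y])" "chain E (y # c)"
      "a \<noteq> [] \<longrightarrow> E (last a) y"
    proof -
      have A: "chain E (a @ ((y # b) @ ([y] @ c)))" using less(4) xs by simp
      note A1 = chain_append[THEN iffD1, OF A]
      note A2 = chain_append[THEN iffD1, OF A1[THEN conjunct2, THEN conjunct1]]
      note A3 = chain_append[THEN iffD1, OF A2[THEN conjunct2, THEN conjunct1]]
      have "chain E ((y # b) @ [y])" using A2 A3 by (subst chain_append) simp
      then show "chain E a" "chain E (y # b @ [y])" "chain E (y # c)"
      "a \<noteq> [] \<longrightarrow> E (last a) y" using A1 A2 by auto
    qed
    have hd2: "hd (a @ y # c) = hd xs" unfolding xs by (cases a) auto
    have last2: "last (a @ y # c) = last xs" unfolding xs by (cases c) auto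
    have len: "length xs = length (y # b) + length (a @ y # c)" unfolding xs by simp
    consider "odd (length (y # b))" | "odd (length (a @ y # c))" using less(5) len by auto
    then show ?thesis
    proof cases
      case 1
      have c1: "chain E (y # b)" using ch(2) chain_append[of E "y # b" "[y]"] by simp
      have e1: "E (last (y # b)) (hd (y # b))" using ch(2) chain_append[of E "y # b" "[y]"] by simp
      show ?thesis
        by (rule less(1)[of "y # b"]) (use 1 c1 e1 less(3) xs in auto)
    next
      case 2
      have c2: "chain E (a @ y # c)" using ch by (auto simp: chain_append)
      show ?thesis
        by (rule less(1)[of "a @ y # c"]) (use 2 c2 less(3,6) xs hd2 last2 in auto)
    qed
  qed
qed


lemma gdist_ex:
  assumes "connected_graph V E" "u \<in> V" "v \<in> V"
  shows "\<exists>xs. walk V E xs \<and> hd xs = u \<and> last xs = v \<and> length xs = Suc (gdist V E u v)"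
proof -
  obtain xs where xs: "walk V E xs" "hd xs = u" "last xs = v"
    using assms unfolding connected_graph_def by blast
  then have "length xs = Suc (length xs - 1)" by (cases xs) (auto simp: walk_def)
  then have "\<exists>n. \<exists>xs. walk V E xs \<and> hd xs = u \<and> last xs = v \<and> length xs = Suc n"
    using xs by blast
  from LeastI_ex[OF this] show ?thesis unfolding gdist_def .
qed

lemma gdist_le:
  assumes "walk V E xs" "hd xs = u" "last xs = v"
  shows "gdist V E u v \<le> length xs - 1"
proof -
  have "length xs = Suc (length xs - 1)" using assms by (cases xs) (auto simp: walk_def)
  then show ?thesis unfolding gdist_def using assms by (intro Least_le) blast
qed

lemma shortest_distinct:
  assumes "walk V E xs" "hd xs = u" "last xs = v" "length xs = Suc (gdist V E u v)"
  shows "distinct xs"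
proof (rule ccontr)
  assume "\<not> distinct xs"
  then obtain a y b c where xs: "xs = a @ [y] @ b @ [y] @ c"
    using not_distinct_decomp by blast
  have A: "chain E (a @ ((y # b) @ ([y] @ c)))" using assms(1) xs by (simp add: walk_chain)
  note A1 = chain_append[THEN iffD1, OF A]
  note A2 = chain_append[THEN iffD1, OF A1[THEN conjunct2, THEN conjunct1]]
  have "chain E (a @ ([y] @ c))" using A1 A2 chain_append[of E a "[y] @ c"] by auto
  then have "walk V E (a @ y # c)" using assms(1) xs by (auto simp: walk_chain)
  moreover have "hd (a @ y # c) = u" using assms(2) xs by (cases a) auto
  moreover have "last (a @ y # c) = v" using assms(3) xs by (cases c) auto
  ultimately have "gdist V E u v \<le> length (a @ y # c) - 1" by (rule gdist_le)
  then show False using assms(4) xs by simp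
qed

lemma tree_two_col:
  assumes T: "is_tree V E"
  shows "\<exists>f. e_injective_coloring V E 2 f"
proof -
  have sg: "simple_graph V E" and con: "connected_graph V E" and nc: "\<not> has_cycle V E"
    and ne: "V \<noteq> {}" using T unfolding is_tree_def by auto
  have sym: "\<And>u v. E u v \<Longrightarrow> E v u" and irr: "\<And>u. \<not> E u u"
    and inV: "\<And>u v. E u v \<Longrightarrow> u \<in> V \<and> v \<in> V"
    using sg unfolding simple_graph_def by blast+
  obtain r where r: "r \<in> V" using ne by blast
  define d where "d w = gdist V E r w" for w
  have step: "d b \<le> Suc (d a)" if ab: "E a b" for a b
  proof -
    obtain p where p: "walk V E p" "hd p = r" "last p = a" "length p = Suc (d a)"
      using gdist_ex[OF con r, of a] inV[OF ab] unfolding d_def by blast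
    have "walk V E (p @ [b])" using p ab inV[OF ab]
      by (auto simp: walk_chain chain_append)
    moreover have "hd (p @ [b]) = r" using p by (cases p) (auto simp: walk_def)
    ultimately have "gdist V E r b \<le> length (p @ [b]) - 1" by (intro gdist_le) auto
    then show ?thesis using p unfolding d_def by simp
  qed
  have neq: "d a \<noteq> d b" if e: "E a b" for a b
  proof
    assume eq: "d a = d b"
    obtain p where p: "walk V E p" "hd p = r" "last p = a" "length p = Suc (d a)"
      using gdist_ex[OF con r, of a] inV[OF e] unfolding d_def by blast
    obtain q where q: "walk V E q" "hd q = r" "last q = b" "length q = Suc (d b)"
      using gdist_ex[OF con r, of b] inV[OF e] unfolding d_def by blast
    show False
    proof (cases "d a = 0")
      case True
      then have "a = r" "b = r" using p q eq by (cases p; cases q; auto)+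
      then show False using e irr by simp
    next
      case False
      have qq: "q = r # tl q" using q by (cases q) (auto simp: walk_def)
      have tlne: "tl q \<noteq> []" using q False eq by (cases q) auto
      define L where "L = p @ rev (tl q)"
      have chq: "chain E (rev q)" using q chain_rev[of E q] sym by (auto simp: walk_chain)
      have ch: "chain E (p @ rev q)" using p chq e q
        by (subst chain_append) (auto simp: walk_chain hd_rev)
      have LL: "L @ [hd L] = p @ rev q"
      proof -
        have "hd L = r" using p unfolding L_def by (cases p) (auto simp: walk_def)
        then show ?thesis unfolding L_def by (subst (2) qq) simp
      qed
      have chL: "chain E L" and eL: "E (last L) (hd L)"
        using ch chain_append[of E L "[hd L]"] unfolding LL[symmetric] using p by (auto simp: L_def walk_def)
      have setL: "set L \<subseteq> V" using p q unfolding L_def walk_def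
        by (auto dest: list.set_sel(2))
      have "odd (length L)" unfolding L_def using p q eq by simp
      moreover have "L \<noteq> []" unfolding L_def using p by (auto simp: walk_def)
      ultimately have "has_cycle V E" using odd_cycle[OF sg] chL eL setL by blast
      then show False using nc by simp
    qed
  qed
  have par: "odd (d a) \<noteq> odd (d b)" if "E a b" for a b
  proof -
    have "d b \<le> Suc (d a)" "d a \<le> Suc (d b)" "d a \<noteq> d b"
      using step[OF that] step[OF sym[OF that]] neq[OF that] by auto
    then have "d b = Suc (d a) \<or> d a = Suc (d b)" by linarith
    then show ?thesis by auto
  qed
  define f where "f w = (if odd (d w) then 2 else 1::nat)" for w
  have "e_injective_coloring V E 2 f"
    unfolding e_injective_coloring_def
  proof (intro conjI allI impI)
    show "f ` V \<subseteq> {1..2}" unfolding f_def by auto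
  next
    fix u x y v assume "is_P4 E u x y v"
    then have "E u x" "E x y" "E y v" unfolding is_P4_def by auto
    then show "f u \<noteq> f v" using par[of u x] par[of x y] par[of y v] unfolding f_def by auto
  qed
  then show ?thesis by blast
qed


lemma diam_facts:
  assumes T: "is_tree V E"
  shows "finite {gdist V E u v | u v. u \<in> V \<and> v \<in> V}"
    "{gdist V E u v | u v. u \<in> V \<and> v \<in> V} \<noteq> {}"
proof -
  have "{gdist V E u v | u v. u \<in> V \<and> v \<in> V} = (\<lambda>(u,v). gdist V E u v) ` (V \<times> V)" by auto
  moreover have "finite V" using T unfolding is_tree_def simple_graph_def by blast
  ultimately show "finite {gdist V E u v | u v. u \<in> V \<and> v \<in> V}" by simp
  show "{gdist V E u v | u v. u \<in> V \<and> v \<in> V} \<noteq> {}" using T unfolding is_tree_def by auto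
qed

lemma short3: "length w \<le> 3 \<Longrightarrow> w \<noteq> [] \<Longrightarrow>
   w = [hd w] \<or> w = [hd w, last w] \<or> (\<exists>z. w = [hd w, z, last w])"
proof (cases w)
  case (Cons a r)
  assume l: "length w \<le> 3"
  show ?thesis
  proof (cases r)
    case (Cons b r')
    show ?thesis
    proof (cases r')
      case (Cons c r'')
      then have "r'' = []" using l \<open>w = a # r\<close> \<open>r = b # r'\<close> by simp
      then show ?thesis using Cons \<open>w = a # r\<close> \<open>r = b # r'\<close> by simp
    qed (use Cons \<open>w = a # r\<close> in simp)
  qed (use Cons in simp)
qed simp

lemma long4: "length w \<ge> 4 \<Longrightarrow> \<exists>a b c d rest. w = a # b # c # d # rest"
  by (cases w; simp; rename_tac r; case_tac r; simp; rename_tac r'; case_tac r'; simp;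
      rename_tac r''; case_tac r''; simp)

lemma P4_diam:
  assumes T: "is_tree V E"
  shows "(\<exists>u x y v. is_P4 E u x y v) \<longleftrightarrow> diam V E \<ge> 3"
proof -
  have sg: "simple_graph V E" and con: "connected_graph V E" and nc: "\<not> has_cycle V E"
    using T unfolding is_tree_def by auto
  have sym: "\<And>u v. E u v \<Longrightarrow> E v u" and irr: "\<And>u. \<not> E u u"
    and inV: "\<And>u v. E u v \<Longrightarrow> u \<in> V \<and> v \<in> V"
    using sg unfolding simple_graph_def by blast+
  note fin = diam_facts[OF T]
  show ?thesis
  proof
    assume "\<exists>u x y v. is_P4 E u x y v"
    then obtain u x y v where P: "is_P4 E u x y v" by blast
    then have d: "distinct [u,x,y,v]" and e: "E u x" "E x y" "E y v" unfolding is_P4_def by auto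
    have uv: "u \<in> V" "v \<in> V" "x \<in> V" "y \<in> V" using inV e by blast+
    obtain w where w: "walk V E w" "hd w = u" "last w = v" "length w = Suc (gdist V E u v)"
      using gdist_ex[OF con uv(1,2)] by blast
    have "gdist V E u v \<ge> 3"
    proof (rule ccontr)
      assume "\<not> gdist V E u v \<ge> 3"
      then have "length w \<le> 3" using w by simp
      then consider "w = [u]" | "w = [u, v]" | z where "w = [u, z, v]"
        using short3[of w] w(1,2,3) by (auto simp: walk_def)
      then show False
      proof cases
        case 1 then show False using w d by simp
      next
        case 2
        then have "E u v" using w by (simp add: walk_chain)
        then have "E v u" by (rule sym)
        then have "has_cycle V E" unfolding has_cycle_def using d e uv
          by (intro exI[of _ "[u,x,y,v]"]) (auto simp: walk_chain)
        then show False using nc by simp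
      next
        case 3
        then have zu: "E u z" "E z v" "z \<in> V" using w by (auto simp: walk_chain)
        have "has_cycle V E"
        proof (cases "z = x \<or> z = y")
          case True
          then show ?thesis
          proof
            assume "z = x"
            then show ?thesis unfolding has_cycle_def using d e uv zu sym[OF zu(2)]
              by (intro exI[of _ "[x,y,v]"]) (auto simp: walk_chain)
          next
            assume "z = y"
            then show ?thesis unfolding has_cycle_def using d e uv zu sym[OF zu(1)]
              by (intro exI[of _ "[u,x,y]"]) (auto simp: walk_chain)
          qed
        next
          case False
          moreover have "z \<noteq> u" "z \<noteq> v" using zu irr by auto
          ultimately show ?thesis unfolding has_cycle_def using d e uv zu sym[OF zu(1)] sym[OF zu(2)]
            by (intro exI[of _ "[u,x,y,v,z]"]) (auto simp: walk_chain)
        qed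
        then show False using nc by simp
      qed
    qed
    moreover have "gdist V E u v \<le> diam V E" unfolding diam_def
      using uv by (intro Max_ge[OF fin(1)]) blast
    ultimately show "diam V E \<ge> 3" by simp
  next
    assume D: "diam V E \<ge> 3"
    have "diam V E \<in> {gdist V E u v | u v. u \<in> V \<and> v \<in> V}"
      unfolding diam_def using Max_in[OF fin] .
    then obtain u v where uv: "u \<in> V" "v \<in> V" "diam V E = gdist V E u v" by blast
    obtain w where w: "walk V E w" "hd w = u" "last w = v" "length w = Suc (gdist V E u v)"
      using gdist_ex[OF con uv(1,2)] by blast
    have dw: "distinct w" using shortest_distinct[OF w] .
    have "length w \<ge> 4" using w D uv by simp
    then obtain a b c d' rest where wr: "w = a # b # c # d' # rest"
      using long4 by blast
    have "is_P4 E a b c d'" using w(1) dw unfolding wr is_P4_def by (auto simp: walk_chain)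
    then show "\<exists>u x y v. is_P4 E u x y v" by blast
  qed
qed

theorem proposition2p5:
  fixes V :: "'a set" and E :: "'a \<Rightarrow> 'a \<Rightarrow> bool"
  assumes "is_tree V E"
  shows "(chi_ei V E = 1 \<longleftrightarrow> diam V E \<le> 2) \<and> (chi_ei V E = 2 \<longleftrightarrow> diam V E \<ge> 3)"
proof -
  have sg: "simple_graph V E" using assms unfolding is_tree_def by auto
  have inV: "\<And>u v. E u v \<Longrightarrow> u \<in> V \<and> v \<in> V"
    using sg unfolding simple_graph_def by blast+
  obtain f2 where f2: "e_injective_coloring V E 2 f2" using tree_two_col[OF assms] by blast
  let ?P = "\<lambda>k. k > 0 \<and> (\<exists>f. e_injective_coloring V E k f)"
  have P2: "?P 2" using f2 by auto
  have le2: "chi_ei V E \<le> 2" unfolding chi_ei_def using P2 by (rule Least_le)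
  have Pc: "?P (chi_ei V E)" unfolding chi_ei_def using P2 by (rule LeastI)
  have one: "chi_ei V E = 1 \<longleftrightarrow> \<not> (\<exists>u x y v. is_P4 E u x y v)"
  proof
    assume "chi_ei V E = 1"
    then obtain f where f: "e_injective_coloring V E 1 f" using Pc by auto
    show "\<not> (\<exists>u x y v. is_P4 E u x y v)"
    proof
      assume "\<exists>u x y v. is_P4 E u x y v"
      then obtain u x y v where P: "is_P4 E u x y v" by blast
      then have "u \<in> V" "v \<in> V" using inV unfolding is_P4_def by blast+
      then have "f u = 1" "f v = 1" using f unfolding e_injective_coloring_def by auto
      moreover have "f u \<noteq> f v" using f P unfolding e_injective_coloring_def by blast
      ultimately show False by simp
    qed
  next
    assume N: "\<not> (\<exists>u x y v. is_P4 E u x y v)"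
    have "e_injective_coloring V E 1 (\<lambda>_. 1)" using N unfolding e_injective_coloring_def by auto
    then have "?P 1" by auto
    then have "chi_ei V E \<le> 1" unfolding chi_ei_def by (rule Least_le)
    then show "chi_ei V E = 1" using Pc by simp
  qed
  have "chi_ei V E = 1 \<or> chi_ei V E = 2" using le2 Pc by auto
  then show ?thesis using one P4_diam[OF assms] by auto
qed

end
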